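(* Let $(\mathcal{A},\mu,\alpha)$ be a multiplicative Hom-alternative superalgebra. Then the $n$th derived Hom-superalgebra $\mathcal{A}^{n}=(\mathcal{A},\mu^{(n)}=\alpha^{2^{n}-1}\circ\mu,\alpha^{2^{n}})$ is also a multiplicative Hom-alternative superalgebra for each $n\geq0$.
   Context: $\mathcal{A}=\mathcal{A}_0\oplus\mathcal{A}_1$ is a $\mathbb{Z}_2$-graded vector space over an algebraically closed field $\mathbb{K}$ of characteristic $0$; $|x|$ is the parity of homogeneous $x$; even maps preserve parity. For even bilinear $\mu$ and even linear $\alpha$, $\widetilde{as}(x,y,z)=\mu(\mu(x,y),\alpha(z))-\mu(\alpha(x),\mu(y,z))$. A Hom-alternative superalgebra is a triple $(\mathcal{A},\mu,\alpha)$ with $\widetilde{as}(x,y,z)+(-1)^{|x||y|}\widetilde{as}(y,x,z)=0$ and $\widetilde{as}(x,y,z)+(-1)^{|y||z|}\widetilde{as}(x,z,y)=0$ for all homogeneous $x,y,z$; it is multiplicative if $\alpha\circ\mu=\mu\circ(\alpha\otimes\alpha)$. *)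

theory Defs
  imports Main "HOL-Computational_Algebra.Polynomial"
begin

definition alg_closed_field :: "'k::field itself \<Rightarrow> bool" where
  "alg_closed_field _ \<longleftrightarrow> (\<forall>p :: 'k poly. degree p > 0 \<longrightarrow> (\<exists>x. poly p x = 0))"

text \<open>A Z2-graded vector space V = A0 (+) A1 over the scalars of scale
  (the whole type 'v is the underlying space).\<close>
definition graded_space :: "('k::field \<Rightarrow> 'v::ab_group_add \<Rightarrow> 'v) \<Rightarrow> 'v set \<Rightarrow> 'v set \<Rightarrow> bool" where
  "graded_space scale A0 A1 \<longleftrightarrow>
     vector_space scale \<and> module.subspace scale A0 \<and> module.subspace scale A1 \<and>
     A0 \<inter> A1 = {0} \<and> (\<forall>x. \<exists>a\<in>A0. \<exists>b\<in>A1. x = a + b)"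

definition grade :: "'v set \<Rightarrow> 'v set \<Rightarrow> nat \<Rightarrow> 'v set" where
  "grade A0 A1 i = (if i = 0 then A0 else A1)"

definition even_bilinear ::
  "('k::field \<Rightarrow> 'v::ab_group_add \<Rightarrow> 'v) \<Rightarrow> 'v set \<Rightarrow> 'v set \<Rightarrow> ('v \<Rightarrow> 'v \<Rightarrow> 'v) \<Rightarrow> bool" where
  "even_bilinear scale A0 A1 mu \<longleftrightarrow>
     (\<forall>x. Vector_Spaces.linear scale scale (mu x)) \<and>
     (\<forall>y. Vector_Spaces.linear scale scale (\<lambda>x. mu x y)) \<and>
     (\<forall>i<2. \<forall>j<2. \<forall>x\<in>grade A0 A1 i. \<forall>y\<in>grade A0 A1 j. mu x y \<in> grade A0 A1 ((i + j) mod 2))"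

definition even_linear ::
  "('k::field \<Rightarrow> 'v::ab_group_add \<Rightarrow> 'v) \<Rightarrow> 'v set \<Rightarrow> 'v set \<Rightarrow> ('v \<Rightarrow> 'v) \<Rightarrow> bool" where
  "even_linear scale A0 A1 f \<longleftrightarrow>
     Vector_Spaces.linear scale scale f \<and> f ` A0 \<subseteq> A0 \<and> f ` A1 \<subseteq> A1"

definition hom_assoc :: "('v \<Rightarrow> 'v \<Rightarrow> 'v::ab_group_add) \<Rightarrow> ('v \<Rightarrow> 'v) \<Rightarrow> 'v \<Rightarrow> 'v \<Rightarrow> 'v \<Rightarrow> 'v" where
  "hom_assoc mu alpha x y z = mu (mu x y) (alpha z) - mu (alpha x) (mu y z)"

definition hom_alt_superalgebra ::
  "('k::field \<Rightarrow> 'v::ab_group_add \<Rightarrow> 'v) \<Rightarrow> 'v set \<Rightarrow> 'v set \<Rightarrow> ('v \<Rightarrow> 'v \<Rightarrow> 'v) \<Rightarrow> ('v \<Rightarrow> 'v) \<Rightarrow> bool" where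
  "hom_alt_superalgebra scale A0 A1 mu alpha \<longleftrightarrow>
     graded_space scale A0 A1 \<and> even_bilinear scale A0 A1 mu \<and> even_linear scale A0 A1 alpha \<and>
     (\<forall>i<2. \<forall>j<2. \<forall>k<2. \<forall>x\<in>grade A0 A1 i. \<forall>y\<in>grade A0 A1 j. \<forall>z\<in>grade A0 A1 k.
        hom_assoc mu alpha x y z + scale ((-1) ^ (i * j)) (hom_assoc mu alpha y x z) = 0 \<and>
        hom_assoc mu alpha x y z + scale ((-1) ^ (j * k)) (hom_assoc mu alpha x z y) = 0)"

definition multiplicative :: "('v \<Rightarrow> 'v \<Rightarrow> 'v) \<Rightarrow> ('v \<Rightarrow> 'v) \<Rightarrow> bool" where
  "multiplicative mu alpha \<longleftrightarrow> (\<forall>x y. alpha (mu x y) = mu (alpha x) (alpha y))"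

definition derived_mu :: "('v \<Rightarrow> 'v \<Rightarrow> 'v) \<Rightarrow> ('v \<Rightarrow> 'v) \<Rightarrow> nat \<Rightarrow> 'v \<Rightarrow> 'v \<Rightarrow> 'v" where
  "derived_mu mu alpha n = (\<lambda>x y. (alpha ^^ (2 ^ n - 1)) (mu x y))"

definition derived_alpha :: "('v \<Rightarrow> 'v) \<Rightarrow> nat \<Rightarrow> 'v \<Rightarrow> 'v" where
  "derived_alpha alpha n = alpha ^^ (2 ^ n)"

end

theory Submission
  imports Defs
begin

lemma pow_lin:
  assumes "Vector_Spaces.linear s s f"
  shows "Vector_Spaces.linear s s (f ^^ k)"
proof (induction k)
  case 0
  then show ?case using assms by (simp add: Vector_Spaces.linear_iff)
next
  case (Suc k)
  then show ?case using assms Vector_Spaces.linear_compose[OF Suc assms] by (simp add: comp_def)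
qed

lemma pow_mult:
  assumes "multiplicative mu alpha"
  shows "(alpha ^^ k) (mu x y) = mu ((alpha ^^ k) x) ((alpha ^^ k) y)"
  using assms by (induction k) (auto simp: multiplicative_def)

lemma pow_grade:
  assumes "f ` A \<subseteq> A"
  shows "(f ^^ k) ` A \<subseteq> A"
  using assms by (induction k) auto

lemma lin_zero:
  assumes "Vector_Spaces.linear s s f"
  shows "f 0 = 0"
proof -
  have "f (0 + 0) = f 0 + f 0" using assms unfolding Vector_Spaces.linear_iff by blast
  then show ?thesis by simp
qed

lemma lin_scale:
  assumes "Vector_Spaces.linear s s f"
  shows "f (s c x) = s c (f x)" and "f (x + y) = f x + f y"
  using assms by (simp_all add: Vector_Spaces.linear_iff)

lemma lin_sub:
  assumes "Vector_Spaces.linear s s (f::'v::ab_group_add \<Rightarrow> 'v)"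
  shows "f (x - y) = f x - f y"
proof -
  have "f (x - y) + f y = f x" using lin_scale(2)[OF assms, of "x - y" y] by simp
  then show ?thesis by (simp add: eq_diff_eq)
qed

theorem mainTheorem12:
  fixes scale :: "'k::field_char_0 \<Rightarrow> 'v::ab_group_add \<Rightarrow> 'v"
    and A0 A1 :: "'v set"
    and mu :: "'v \<Rightarrow> 'v \<Rightarrow> 'v"
    and alpha :: "'v \<Rightarrow> 'v"
    and n :: nat
  assumes "alg_closed_field TYPE('k)"
    and "hom_alt_superalgebra scale A0 A1 mu alpha"
    and "multiplicative mu alpha"
  shows "hom_alt_superalgebra scale A0 A1 (derived_mu mu alpha n) (derived_alpha alpha n) \<and>
         multiplicative (derived_mu mu alpha n) (derived_alpha alpha n)"
proof -
  define b where "b = alpha ^^ (2 ^ n - 1)"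
  define a where "a = alpha ^^ (2 ^ n)"
  have ab: "a = alpha \<circ> b" unfolding a_def b_def
    by (metis One_nat_def Suc_pred funpow.simps(2) nat_zero_less_power_iff pos2)
  have dm: "derived_mu mu alpha n = (\<lambda>x y. b (mu x y))" by (simp add: derived_mu_def b_def)
  have da: "derived_alpha alpha n = a" by (simp add: derived_alpha_def a_def)
  note H = assms(2)[unfolded hom_alt_superalgebra_def]
  have gs: "graded_space scale A0 A1" using H by blast
  have eb: "even_bilinear scale A0 A1 mu" using H by blast
  have el: "even_linear scale A0 A1 alpha" using H by blast
  have linal: "Vector_Spaces.linear scale scale alpha" using el by (simp add: even_linear_def)
  have linb: "Vector_Spaces.linear scale scale b" unfolding b_def by (rule pow_lin[OF linal])
  have lina: "Vector_Spaces.linear scale scale a" unfolding a_def by (rule pow_lin[OF linal])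
  have bA0: "b ` A0 \<subseteq> A0" unfolding b_def by (rule pow_grade) (use el in \<open>simp add: even_linear_def\<close>)
  have bA1: "b ` A1 \<subseteq> A1" unfolding b_def by (rule pow_grade) (use el in \<open>simp add: even_linear_def\<close>)
  have aA0: "a ` A0 \<subseteq> A0" unfolding a_def by (rule pow_grade) (use el in \<open>simp add: even_linear_def\<close>)
  have aA1: "a ` A1 \<subseteq> A1" unfolding a_def by (rule pow_grade) (use el in \<open>simp add: even_linear_def\<close>)
  have bg: "b x \<in> grade A0 A1 i" if "x \<in> grade A0 A1 i" for x i
    using that bA0 bA1 by (auto simp: grade_def split: if_splits)
  have bmu: "b (mu x y) = mu (b x) (b y)" for x y unfolding b_def by (rule pow_mult[OF assms(3)])
  have amu: "a (mu x y) = mu (a x) (a y)" for x y unfolding a_def by (rule pow_mult[OF assms(3)])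
  have ba: "b (a x) = a (b x)" for x unfolding a_def b_def
    by (metis comp_apply funpow_add add.commute)
  have HA: "hom_assoc (\<lambda>x y. b (mu x y)) a x y z = b (hom_assoc mu alpha (b x) (b y) (b z))" for x y z
    unfolding hom_assoc_def lin_sub[OF linb] ab by (simp add: bmu)
  have eb': "even_bilinear scale A0 A1 (\<lambda>x y. b (mu x y))"
    unfolding even_bilinear_def
  proof (intro conjI allI impI ballI)
    fix x
    have "Vector_Spaces.linear scale scale (mu x)" using eb by (simp add: even_bilinear_def)
    from Vector_Spaces.linear_compose[OF this linb]
    show "Vector_Spaces.linear scale scale (\<lambda>y. b (mu x y))" by (simp add: comp_def)
  next
    fix y
    have "Vector_Spaces.linear scale scale (\<lambda>x. mu x y)" using eb by (simp add: even_bilinear_def)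
    from Vector_Spaces.linear_compose[OF this linb]
    show "Vector_Spaces.linear scale scale (\<lambda>x. b (mu x y))" by (simp add: comp_def)
  next
    fix i j x y assume "i < (2::nat)" "j < (2::nat)" "x \<in> grade A0 A1 i" "y \<in> grade A0 A1 j"
    then have "mu x y \<in> grade A0 A1 ((i + j) mod 2)" using eb by (simp add: even_bilinear_def)
    then show "b (mu x y) \<in> grade A0 A1 ((i + j) mod 2)" by (rule bg)
  qed
  have el': "even_linear scale A0 A1 a" using lina aA0 aA1 by (simp add: even_linear_def)
  have ax: "\<forall>i<2. \<forall>j<2. \<forall>k<2. \<forall>x\<in>grade A0 A1 i. \<forall>y\<in>grade A0 A1 j. \<forall>z\<in>grade A0 A1 k.
        hom_assoc (\<lambda>x y. b (mu x y)) a x y z + scale ((-1) ^ (i * j)) (hom_assoc (\<lambda>x y. b (mu x y)) a y x z) = 0 \<and>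
        hom_assoc (\<lambda>x y. b (mu x y)) a x y z + scale ((-1) ^ (j * k)) (hom_assoc (\<lambda>x y. b (mu x y)) a x z y) = 0"
  proof (intro allI impI ballI conjI)
    fix i j k :: nat and x y z
    assume ij: "i < 2" "j < 2" "k < 2" and g: "x \<in> grade A0 A1 i" "y \<in> grade A0 A1 j" "z \<in> grade A0 A1 k"
    have gb: "b x \<in> grade A0 A1 i" "b y \<in> grade A0 A1 j" "b z \<in> grade A0 A1 k" using g bg by auto
    have e1: "hom_assoc mu alpha (b x) (b y) (b z) + scale ((-1) ^ (i * j)) (hom_assoc mu alpha (b y) (b x) (b z)) = 0"
     and e2: "hom_assoc mu alpha (b x) (b y) (b z) + scale ((-1) ^ (j * k)) (hom_assoc mu alpha (b x) (b z) (b y)) = 0"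
      using H ij gb by blast+
    show "hom_assoc (\<lambda>x y. b (mu x y)) a x y z + scale ((-1) ^ (i * j)) (hom_assoc (\<lambda>x y. b (mu x y)) a y x z) = 0"
      unfolding HA using arg_cong[OF e1, of b] by (simp add: lin_scale[OF linb] lin_zero[OF linb])
    show "hom_assoc (\<lambda>x y. b (mu x y)) a x y z + scale ((-1) ^ (j * k)) (hom_assoc (\<lambda>x y. b (mu x y)) a x z y) = 0"
      unfolding HA using arg_cong[OF e2, of b] by (simp add: lin_scale[OF linb] lin_zero[OF linb])
  qed
  have mult: "multiplicative (\<lambda>x y. b (mu x y)) a"
    unfolding multiplicative_def by (simp add: ba[symmetric] amu)
  show ?thesis unfolding dm da hom_alt_superalgebra_def using gs eb' el' ax mult by blast
qed

end
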